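(* Let \[ \theta = \begin{pmatrix} 0 & \theta_{1,2} & \theta_{1,3} \\ -\theta_{1,2} & 0 & \theta_{2,3} \\ -\theta_{1,3} & -\theta_{2,3} & 0 \end{pmatrix} \] be a skew symmetric real $3 \times 3$ matrix. Then $\theta$ is nondegenerate if and only if $\dim_{\mathbb{Q}} \operatorname{span}_{\mathbb{Q}}(1, \theta_{1,2}, \theta_{1,3}, \theta_{2,3}) \geq 3$.
   Context: A skew symmetric real $d \times d$ matrix $\theta$ is nondegenerate if there is no $x \in \mathbb{Q}^d \setminus \{0\}$ such that $\langle x, \theta y \rangle \in \mathbb{Q}$ for all $y \in \mathbb{Q}^d$. *)

theory Defs
  imports "HOL-Analysis.Analysis"
begin

text \<open>Real numbers viewed as a vector space over the rationals.\<close>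
definition rscale :: "rat \<Rightarrow> real \<Rightarrow> real" where
  "rscale q x = real_of_rat q * x"

definition dim_Q :: "real set \<Rightarrow> nat" where
  "dim_Q S = vector_space.dim rscale S"

definition rat_vec :: "real^'n \<Rightarrow> bool" where
  "rat_vec x \<longleftrightarrow> (\<forall>i. x $ i \<in> \<rat>)"

definition nondegenerate :: "real^'n^'n \<Rightarrow> bool" where
  "nondegenerate \<theta> \<longleftrightarrow>
     \<not> (\<exists>x. rat_vec x \<and> x \<noteq> 0 \<and> (\<forall>y. rat_vec y \<longrightarrow> x \<bullet> (\<theta> *v y) \<in> \<rat>))"

lemma "vector_space rscale"
  unfolding rscale_def by unfold_locales (auto simp: algebra_simps of_rat_add of_rat_mult)

end

theory Submission
  imports Defs
begin
definition inQ :: "real \<Rightarrow> real \<Rightarrow> bool" where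
  "inQ t x \<longleftrightarrow> (\<exists>p\<in>\<rat>. \<exists>q\<in>\<rat>. x = p + q * t)"
lemma vsQ: "vector_space rscale"
  unfolding rscale_def by unfold_locales (auto simp: algebra_simps of_rat_add of_rat_mult)
lemma span_Q: "module.span rscale {1, t} = {x. inQ t x}"
proof -
  interpret Q: vector_space rscale by (rule vsQ)
  have "module.span rscale {1, t} = {x. \<exists>k. \<exists>j. x - rscale k t = rscale j 1}"
    by (subst insert_commute, subst Q.span_insert) (auto simp: Q.span_singleton)
  also have "\<dots> = {x. inQ t x}"
    unfolding inQ_def rscale_def Rats_def
  proof (safe, goal_cases)
    case (1 x k j) then show ?case by (intro bexI[of _ "of_rat j"] bexI[of _ "of_rat k"]) (auto simp: algebra_simps)
  next
    case 2 then show ?case by (metis add_diff_cancel_right' mult.right_neutral)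
  qed
  finally show ?thesis .
qed
lemma dim_iff:
  "dim_Q {1, a, b, c} \<ge> 3 \<longleftrightarrow> \<not> (\<exists>t. inQ t a \<and> inQ t b \<and> inQ t c)"
proof -
  interpret Q: vector_space rscale by (rule vsQ)
  let ?S = "{1, a, b, c}"
  have A: "dim_Q ?S \<le> 2" if "inQ t a" "inQ t b" "inQ t c" for t
  proof -
    have "?S \<subseteq> Q.span {1, t}" using that span_Q[of t] Q.span_base[of 1 "{1,t}"] by auto
    then have "Q.dim ?S \<le> card {1, t}" by (rule Q.dim_le_card) simp
    also have "\<dots> \<le> 2" by (simp add: card_insert_if)
    finally show ?thesis unfolding dim_Q_def .
  qed
  have B: "\<exists>t. inQ t a \<and> inQ t b \<and> inQ t c" if "dim_Q ?S \<le> 2"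
  proof -
    have "Q.independent {1::real}"
      using Q.independent_insert[of 1 "{}"] by (simp add: Q.span_empty)
    then obtain B where B: "{1} \<subseteq> B" "B \<subseteq> ?S" "Q.independent B" "?S \<subseteq> Q.span B"
      using Q.maximal_independent_subset_extend[of "{1}" ?S] by auto
    have fB: "finite B" using B(2) finite_subset by blast
    have "card B = Q.dim ?S" using Q.basis_card_eq_dim B by blast
    with that have cB: "card B \<le> 2" unfolding dim_Q_def by simp
    have "card (B - {1}) \<le> 1" using cB B(1) fB by (simp add: card_Diff_singleton)
    then have all: "\<forall>u\<in>B - {1}. \<forall>v\<in>B - {1}. u = v"
      using fB card_le_Suc0_iff_eq[of "B - {1}"] by simp
    obtain s where "B - {1} \<subseteq> {s}"
    proof (cases "B - {1} = {}")
      case True then show ?thesis using that[of 1] by blast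
    next
      case False then obtain s where "s \<in> B - {1}" by blast
      then show ?thesis using that[of s] all by blast
    qed
    then have "B \<subseteq> {1, s}" by auto
    then have "?S \<subseteq> Q.span {1, s}" using B(4) Q.span_mono by blast
    then show ?thesis using span_Q[of s] by auto
  qed
  show ?thesis using A B by force
qed
lemma inner_formula:
  fixes \<theta> :: "real^3^3"
  assumes "transpose \<theta> = - \<theta>"
  shows "x \<bullet> (\<theta> *v y) = x$1 * (\<theta>$1$2 * y$2 + \<theta>$1$3 * y$3)
     + x$2 * (- \<theta>$1$2 * y$1 + \<theta>$2$3 * y$3) + x$3 * (- \<theta>$1$3 * y$1 - \<theta>$2$3 * y$2)"
proof -
  have s: "\<theta>$j$i = - \<theta>$i$j" for i j
    using arg_cong[OF assms, of "\<lambda>M. M$i$j"] by (simp add: transpose_def)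
  have d: "\<theta>$i$i = 0" for i using s[of i i] by simp
  show ?thesis
    unfolding inner_vec_def matrix_vector_mult_def
    by (simp add: sum_3 d s[of 1 2] s[of 1 3] s[of 2 3] algebra_simps)
qed

theorem lemma4p1:
  fixes \<theta> :: "real^3^3"
  assumes "transpose \<theta> = - \<theta>"
  shows "nondegenerate \<theta> \<longleftrightarrow> dim_Q {1, \<theta>$1$2, \<theta>$1$3, \<theta>$2$3} \<ge> 3"
proof -
  define a where "a = \<theta>$1$2"
  define b where "b = \<theta>$1$3"
  define c where "c = \<theta>$2$3"
  have F: "x \<bullet> (\<theta> *v y) = x$1 * (a * y$2 + b * y$3)
     + x$2 * (- a * y$1 + c * y$3) + x$3 * (- b * y$1 - c * y$2)" for x y
    unfolding a_def b_def c_def by (rule inner_formula[OF assms])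
  have "(\<not> nondegenerate \<theta>) \<longleftrightarrow> (\<exists>t. inQ t a \<and> inQ t b \<and> inQ t c)"
  proof
    assume "\<not> nondegenerate \<theta>"
    then obtain x where x: "rat_vec x" "x \<noteq> 0" and H: "\<And>y. rat_vec y \<Longrightarrow> x \<bullet> (\<theta> *v y) \<in> \<rat>"
      unfolding nondegenerate_def by blast
    have xr: "x$1 \<in> \<rat>" "x$2 \<in> \<rat>" "x$3 \<in> \<rat>" using x(1) unfolding rat_vec_def by auto
    have ra: "rat_vec (axis i (1::real))" for i unfolding rat_vec_def axis_def by auto
    have "x \<bullet> (\<theta> *v axis 1 1) \<in> \<rat>" using H ra by blast
    moreover have "x \<bullet> (\<theta> *v axis 1 1) = - (a * x$2 + b * x$3)"
      unfolding F by (simp add: axis_def algebra_simps)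
    ultimately have r1: "a * x$2 + b * x$3 \<in> \<rat>"
      by (metis Rats_minus_iff)
    have "x \<bullet> (\<theta> *v axis 2 1) \<in> \<rat>" using H ra by blast
    moreover have "x \<bullet> (\<theta> *v axis 2 1) = a * x$1 - c * x$3"
      unfolding F by (simp add: axis_def algebra_simps)
    ultimately have r2: "a * x$1 - c * x$3 \<in> \<rat>" by simp
    have "x \<bullet> (\<theta> *v axis 3 1) \<in> \<rat>" using H ra by blast
    moreover have "x \<bullet> (\<theta> *v axis 3 1) = b * x$1 + c * x$2"
      unfolding F by (simp add: axis_def algebra_simps)
    ultimately have r3: "b * x$1 + c * x$2 \<in> \<rat>" by simp
    have nz: "x$1 \<noteq> 0 \<or> x$2 \<noteq> 0 \<or> x$3 \<noteq> 0"
      using x(2) unfolding vec_eq_iff forall_3 by simp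
    show "\<exists>t. inQ t a \<and> inQ t b \<and> inQ t c"
    proof (cases "x$1 = 0")
      case False
      have "a = (a * x$1 - c * x$3) / x$1 + (x$3 / x$1) * c" using False by (simp add: field_simps)
      then have "inQ c a" unfolding inQ_def using r2 xr False by (metis Rats_divide)
      moreover have "b = (b * x$1 + c * x$2) / x$1 + (- x$2 / x$1) * c" using False by (simp add: field_simps)
      then have "inQ c b" unfolding inQ_def using r3 xr False by (metis Rats_divide Rats_minus_iff)
      moreover have "inQ c c" unfolding inQ_def by (rule bexI[of _ 0]) (auto intro: bexI[of _ 1])
      ultimately show ?thesis by blast
    next
      case x1: True
      show ?thesis
      proof (cases "x$2 = 0")
        case False
        have "a = (a * x$2 + b * x$3) / x$2 + (- x$3 / x$2) * b" using False by (simp add: field_simps)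
        then have "inQ b a" unfolding inQ_def using r1 xr False by (metis Rats_divide Rats_minus_iff)
        moreover have "c = (b * x$1 + c * x$2) / x$2 + 0 * b" using False x1 by (simp add: field_simps)
        then have "inQ b c" unfolding inQ_def using r3 xr False by (metis Rats_divide Rats_0)
        moreover have "inQ b b" unfolding inQ_def by (rule bexI[of _ 0]) (auto intro: bexI[of _ 1])
        ultimately show ?thesis by blast
      next
        case x2: True
        then have x3: "x$3 \<noteq> 0" using nz x1 by simp
        have "b = (a * x$2 + b * x$3) / x$3 + 0 * a" using x2 x3 by (simp add: field_simps)
        then have "inQ a b" unfolding inQ_def using r1 xr x3 by (metis Rats_divide Rats_0)
        moreover have "c = - (a * x$1 - c * x$3) / x$3 + 0 * a" using x1 x3 by (simp add: field_simps)
        then have "inQ a c" unfolding inQ_def using r2 xr x3 by (metis Rats_divide Rats_0 Rats_minus_iff)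
        moreover have "inQ a a" unfolding inQ_def by (rule bexI[of _ 0]) (auto intro: bexI[of _ 1])
        ultimately show ?thesis by blast
      qed
    qed
  next
    assume "\<exists>t. inQ t a \<and> inQ t b \<and> inQ t c"
    then obtain t p1 q1 p2 q2 p3 q3 where
      P: "p1 \<in> \<rat>" "q1 \<in> \<rat>" "p2 \<in> \<rat>" "q2 \<in> \<rat>" "p3 \<in> \<rat>" "q3 \<in> \<rat>"
      and E: "a = p1 + q1 * t" "b = p2 + q2 * t" "c = p3 + q3 * t"
      unfolding inQ_def by metis
    show "\<not> nondegenerate \<theta>"
    proof (cases "q1 = 0 \<and> q2 = 0 \<and> q3 = 0")
      case True
      let ?x = "vector [1, 0, 0] :: real^3"
      have "rat_vec ?x" unfolding rat_vec_def by (simp add: forall_3 vector_3)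
      moreover have "?x \<noteq> 0" by (metis vector_3(1) zero_index zero_neq_one)
      moreover have "?x \<bullet> (\<theta> *v y) \<in> \<rat>" if "rat_vec y" for y
      proof -
        have y: "y$1 \<in> \<rat>" "y$2 \<in> \<rat>" "y$3 \<in> \<rat>" using that unfolding rat_vec_def by auto
        have "?x \<bullet> (\<theta> *v y) = p1 * y$2 + p2 * y$3" unfolding F using True by (simp add: vector_3 E)
        then show ?thesis using y P by simp
      qed
      ultimately show ?thesis unfolding nondegenerate_def by blast
    next
      case False
      let ?x = "vector [q3, -q2, q1] :: real^3"
      have "rat_vec ?x" unfolding rat_vec_def using P by (simp add: forall_3 vector_3)
      moreover have "?x \<noteq> 0" using False by (metis vector_3 zero_index neg_equal_0_iff_equal)
      moreover have "?x \<bullet> (\<theta> *v y) \<in> \<rat>" if "rat_vec y" for y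
      proof -
        have y: "y$1 \<in> \<rat>" "y$2 \<in> \<rat>" "y$3 \<in> \<rat>" using that unfolding rat_vec_def by auto
        have "?x \<bullet> (\<theta> *v y) = q3 * (p1 * y$2 + p2 * y$3) - q2 * (- p1 * y$1 + p3 * y$3)
           + q1 * (- p2 * y$1 - p3 * y$2)" unfolding F by (simp add: vector_3 E algebra_simps)
        then show ?thesis using y P by simp
      qed
      ultimately show ?thesis unfolding nondegenerate_def by blast
    qed
  qed
  then show ?thesis using dim_iff[of a b c] unfolding a_def b_def c_def by blast
qed
end
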